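(* Consider the decentralized Bayesian bandit algorithm described in the context with Gaussian rewards of known variance $\sigma^2$, learning rate $\eta>0$ and prior $\mathcal N(\mu_0,\sigma_0^2)$ on the mean of every arm at every agent. Define $\mu^{(i)}_k(1)=\mu_0$, $\sigma^{(i)}_k(1)=\sigma_0$ and, for $t\ge1$, \[ \tilde\sigma^{(i)}_k(t+1)=\left(\frac{1}{(\sigma^{(i)}_k(t))^2}+\frac{\eta\mathbf 1\{A^{(i)}_t=k\}}{\sigma^2}\right)^{-1/2}, \] \[ \tilde\mu^{(i)}_k(t+1)=\mu^{(i)}_k(t)\left(\frac{\tilde\sigma^{(i)}_k(t+1)}{\sigma^{(i)}_k(t)}\right)^2+\eta Y^{(i)}_t\mathbf 1\{A^{(i)}_t=k\}\left(\frac{\tilde\sigma^{(i)}_k(t+1)}{\sigma}\right)^2, \] \[ \frac{1}{(\sigma^{(i)}_k(t+1))^2}=\sum_{j=1}^N W_{ij}\frac{1}{(\tilde\sigma^{(j)}_k(t+1))^2},\qquad \frac{\mu^{(i)}_k(t+1)}{(\sigma^{(i)}_k(t+1))^2}=\sum_{j=1}^N W_{ij}\frac{\tilde\mu^{(j)}_k(t+1)}{(\tilde\sigma^{(j)}_k(t+1))^2}. \] Then for all $t\ge1$, $i\in[N]$, $k\in[K]$: $\tilde q^{(i)}_{k,t+1}$ is the density of $\mathcal N(\tilde\mu^{(i)}_k(t+1),(\tilde\sigma^{(i)}_k(t+1))^2)$ and $q^{(i)}_{k,t+1}$ is the density of $\mathcal N(\mu^{(i)}_k(t+1),(\sigma^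{(i)}_k(t+1))^2)$.
   Context: $N$ agents; $W\in\mathbb R^{N\times N}$ is a doubly stochastic matrix with nonnegative entries (respecting a connected undirected communication graph). $K$ arms; when agent $i$ plays arm $k$ it observes a reward drawn from $\mathcal N(\theta^*_k,\sigma^2)$ with $\sigma^2$ known. Let $p_\theta$ be the $\mathcal N(\theta,\sigma^2)$ density, $\Theta=\mathbb R$ with Lebesgue measure. Decentralized Bayesian bandit algorithm: each agent $i$ maintains densities $q^{(i)}_{k,t}$, $k\in[K]$, with $q^{(i)}_{k,1}$ equal to the prior density. In round $t$, agent $i$ selects an arm $A^{(i)}_t$ as a function of $(q^{(i)}_{1,t},\dots,q^{(i)}_{K,t})$, observes reward $Y^{(i)}_t$, and forms the tempered posterior $\tilde q^{(i)}_{k,t+1}(\theta)=\frac{q^{(i)}_{k,t}(\theta)p_\theta(Y^{(i)}_t)^\eta}{\int_\Theta q^{(i)}_{k,t}(\phi)p_\phi(Y^{(i)}_t)^\eta d\phi}$ for $k=A^{(i)}_t$, and $\tilde q^{(i)}_{k,t+1}=q^{(i)}_{k,t}$ for $k\neq A^{(i)}_t$. After exchanging with neighbors, each agent sets $q^{(i)}_{k,t+1}(\theta)=\frac{\exp(\sum_{j=1}^N W_{ij}\log\tilde q^{(j)}_{k,t+1}(\theta))}{\int_\Theta\exp(\sum_{j=1}^N W_{ij}\log\tilde q^{(j)}_{k,t+1}(\phi))d\phi}$ for all $k$. *)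

theory Defs
  imports "HOL-Analysis.Analysis" "HOL-Probability.Probability"
begin

text \<open>Agents are indexed by 0..N-1, arms by 0..K-1, rounds by t = 1, 2, ...\<close>

definition temper :: "real \<Rightarrow> real \<Rightarrow> (real \<Rightarrow> real) \<Rightarrow> real \<Rightarrow> real \<Rightarrow> real" where
  "temper \<sigma> \<eta> q y \<theta> =
     q \<theta> * (normal_density \<theta> \<sigma> y) powr \<eta> /
     (LINT \<phi>|lborel. q \<phi> * (normal_density \<phi> \<sigma> y) powr \<eta>)"

definition consensus :: "nat \<Rightarrow> (nat \<Rightarrow> nat \<Rightarrow> real) \<Rightarrow> nat \<Rightarrow> (nat \<Rightarrow> real \<Rightarrow> real) \<Rightarrow> real \<Rightarrow> real" where
  "consensus N W i qs \<theta> =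
     exp (\<Sum>j<N. W i j * ln (qs j \<theta>)) /
     (LINT \<phi>|lborel. exp (\<Sum>j<N. W i j * ln (qs j \<phi>)))"

definition local_step :: "real \<Rightarrow> real \<Rightarrow> (nat \<Rightarrow> nat \<Rightarrow> nat) \<Rightarrow> (nat \<Rightarrow> nat \<Rightarrow> real)
    \<Rightarrow> (nat \<Rightarrow> nat \<Rightarrow> real \<Rightarrow> real) \<Rightarrow> nat \<Rightarrow> nat \<Rightarrow> nat \<Rightarrow> real \<Rightarrow> real" where
  "local_step \<sigma> \<eta> A Y qcur t i k =
     (if A i t = k then temper \<sigma> \<eta> (qcur i k) (Y i t) else qcur i k)"

text \<open>dbb_q N W \<sigma> \<eta> prior A Y t i k is the density q^{(i)}_{k,t} (t \<ge> 1; the value at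
  t = 0 is an unused dummy). A i t is the arm played by agent i in round t and Y i t
  the reward it observed.\<close>
primrec dbb_q :: "nat \<Rightarrow> (nat \<Rightarrow> nat \<Rightarrow> real) \<Rightarrow> real \<Rightarrow> real \<Rightarrow> (real \<Rightarrow> real)
    \<Rightarrow> (nat \<Rightarrow> nat \<Rightarrow> nat) \<Rightarrow> (nat \<Rightarrow> nat \<Rightarrow> real) \<Rightarrow> nat \<Rightarrow> nat \<Rightarrow> nat \<Rightarrow> real \<Rightarrow> real" where
  "dbb_q N W \<sigma> \<eta> prior A Y 0 = (\<lambda>i k. prior)"
| "dbb_q N W \<sigma> \<eta> prior A Y (Suc t) =
     (if t = 0 then (\<lambda>i k. prior)
      else (\<lambda>i k. consensus N W i
                    (\<lambda>j. local_step \<sigma> \<eta> A Y (dbb_q N W \<sigma> \<eta> prior A Y t) t j k)))"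

definition dbb_qt :: "nat \<Rightarrow> (nat \<Rightarrow> nat \<Rightarrow> real) \<Rightarrow> real \<Rightarrow> real \<Rightarrow> (real \<Rightarrow> real)
    \<Rightarrow> (nat \<Rightarrow> nat \<Rightarrow> nat) \<Rightarrow> (nat \<Rightarrow> nat \<Rightarrow> real) \<Rightarrow> nat \<Rightarrow> nat \<Rightarrow> nat \<Rightarrow> real \<Rightarrow> real" where
  "dbb_qt N W \<sigma> \<eta> prior A Y t1 i k =
     local_step \<sigma> \<eta> A Y (dbb_q N W \<sigma> \<eta> prior A Y (t1 - 1)) (t1 - 1) i k"

definition indic :: "bool \<Rightarrow> real" where
  "indic b = (if b then 1 else 0)"

end

theory Submission
  imports Defs
begin

lemma nd_cong: "s^2 = s'^2 \<Longrightarrow> normal_density m s x = normal_density m s' x"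
  by (simp add: normal_density_def)

lemma nd_sym: "normal_density a s b = normal_density b s a"
  by (simp add: normal_density_def power2_commute)

lemma powr_half_sq: "(x::real) > 0 \<Longrightarrow> (x powr (-1/2))^2 = 1/x"
  proof -
  assume x: "x > 0"
  have "(x powr (-1/2))^2 = x powr (of_nat 2 * (-1/2))" using x by (simp only: powr_power[of x])
  also have "\<dots> = x powr -1" by simp
  finally show ?thesis using x by simp
qed

lemma ln_nd: assumes "s \<noteq> 0"
  shows "ln (normal_density m s x) = -(1/(2 *  s^2))*x^2 + (m/s^2)*x + (-(m^2)/(2 *  s^2) - ln (sqrt (2 * pi* s^2)))"
proof -
  have p: "sqrt (2 * pi* s^2) > 0" using assms by simp
  have "ln (normal_density m s x) = ln (1 / sqrt (2 * pi* s^2)) + ln (exp (-(x - m)\<^sup>2/ (2 * s\<^sup>2)))"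
    unfolding normal_density_def using p by (subst ln_mult) auto
  also have "\<dots> = - ln (sqrt (2 * pi* s^2)) + (-(x - m)\<^sup>2/ (2 * s\<^sup>2))"
    using p by (simp add: ln_div)
  also have "\<dots> = -(1/(2 *  s^2))*x^2 + (m/s^2)*x + (-(m^2)/(2 *  s^2) - ln (sqrt (2 * pi* s^2)))"
    using assms by (simp add: power2_diff add_divide_distrib diff_divide_distrib)
  finally show ?thesis .
qed

lemma gauss_norm:
  fixes f :: "real \<Rightarrow> real"
  assumes P: "P > 0" and f: "\<And>x. f x = exp (-(P/2)*x^2 + B*x + D)"
  shows "f x / (LINT y|lborel. f y) = normal_density (B/P) (sqrt (1/P)) x"
proof -
  define C where "C = exp (D + B^2/(2 * P)) * sqrt (2 * pi/P)"
  have C: "C > 0" using P by (simp add: C_def)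
  have eq: "f y = C * normal_density (B/P) (sqrt (1/P)) y" for y
  proof -
    have sq: "(sqrt (1/P))^2 = 1/P" using P by simp
    have s1: "sqrt (2*pi/P) * (1 / sqrt (2*pi*(sqrt (1/P))^2)) = 1"
      using P unfolding sq by simp
    have alg: "D + B^2/(2*P) + (-(y - B/P)\<^sup>2/ (2 * (1/P))) = -(P/2)*y^2 + B*y + D"
      using P by (simp add: field_simps power2_eq_square)
    have e: "exp (D + B^2/(2*P)) * exp (-(y - B/P)\<^sup>2/ (2 * (sqrt (1/P))\<^sup>2)) = exp (-(P/2)*y^2 + B*y + D)"
      unfolding exp_add[symmetric] sq alg ..
    have "C * normal_density (B/P) (sqrt (1/P)) y
       = (sqrt (2 * pi/P) * (1 / sqrt (2 * pi*(sqrt (1/P))^2))) *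
         (exp (D + B^2/(2 * P)) * exp (-(y - B/P)\<^sup>2/ (2 * (sqrt (1/P))\<^sup>2)))"
      unfolding C_def normal_density_def by (simp only: mult_ac)
    also have "\<dots> = exp (-(P/2)*y^2 + B*y + D)" using s1 e by simp
    finally show ?thesis using f by simp
  qed
  have "(LINT y|lborel. f y) = C"
    unfolding eq using P by simp
  thus ?thesis using eq C by simp
qed

lemma quad_comb: "(a1*x^2 + b1*x + c1) + (e::real)*(a2*x^2 + b2*x + c2) = (a1+e*a2)*x^2 + (b1+e*b2)*x + (c1+e*c2)"
  by (simp add: algebra_simps)

lemma temper_nd:
  assumes s: "s \<noteq> 0" and sg: "\<sigma> > 0" and e: "\<eta> > 0"
  shows "temper \<sigma> \<eta> (normal_density m s) y x =
    normal_density ((m/s^2 + \<eta>*y/\<sigma>^2)/(1/s^2+\<eta>/\<sigma>^2)) (sqrt (1/(1/s^2+\<eta>/\<sigma>^2))) x"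
proof -
  define P where "P = 1/s^2+\<eta>/\<sigma>^2"
  have P: "P > 0" unfolding P_def using s sg e by (simp add: add_pos_pos)
  define f where "f = (\<lambda>x. normal_density m s x * (normal_density x \<sigma> y) powr \<eta>)"
  define D where "D = (-(m^2)/(2 * s^2) - ln (sqrt (2 * pi * s^2))) + \<eta> * (-(y^2)/(2 * \<sigma>^2) - ln (sqrt (2 * pi * \<sigma>^2)))"
  have f: "f z = exp (-(P/2)*z^2 + ((m/s^2 + \<eta>*y/\<sigma>^2))*z + D)" for z
  proof -
    have p1: "normal_density m s z > 0" using s by (simp add: normal_density_def)
    have p2: "normal_density z \<sigma> y > 0" using sg by (simp add: normal_density_pos)
    have "f z = exp (ln (normal_density m s z)) * exp (\<eta> * ln (normal_density y \<sigma> z))"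
      unfolding f_def using p1 p2 by (simp add: powr_def nd_sym[of z \<sigma> y])
    also have "\<dots> = exp (ln (normal_density m s z) + \<eta> * ln (normal_density y \<sigma> z))"
      by (simp add: exp_add)
    also have "ln (normal_density m s z) + \<eta> * ln (normal_density y \<sigma> z)
       = -(P/2)*z^2 + ((m/s^2 + \<eta>*y/\<sigma>^2))*z + D"
      unfolding ln_nd[OF s] ln_nd[of \<sigma>, OF sg[THEN less_imp_neq, symmetric]] quad_comb
      unfolding P_def D_def by (simp add: algebra_simps)
    finally show ?thesis .
  qed
  have "temper \<sigma> \<eta> (normal_density m s) y x = f x / (LINT z|lborel. f z)"
    unfolding temper_def f_def ..
  also have "\<dots> = normal_density ((m/s^2 + \<eta>*y/\<sigma>^2)/P) (sqrt (1/P)) x"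
    by (rule gauss_norm[OF P f])
  finally show ?thesis unfolding P_def .
qed

lemma lin_term: "(w::real)*(-(1/(2*a))*z^2 + (mm/a)*z + c) = (-(w*(1/a))/2)*z^2 + (w*(mm/a))*z + w*c"
  by (simp add: algebra_simps)

lemma sum_quad: "(\<Sum>j\<in>I. (a j::real)*z^2 + b j*z + c j) = (\<Sum>j\<in>I. a j)*z^2 + (\<Sum>j\<in>I. b j)*z + (\<Sum>j\<in>I. c j)"
  by (simp add: sum.distrib sum_distrib_right)

lemma consensus_nd:
  assumes s: "\<And>j. j < N \<Longrightarrow> s j \<noteq> 0"
    and q: "\<And>j x. j < N \<Longrightarrow> qs j x = normal_density (m j) (s j) x"
    and Wn: "\<And>j. j < N \<Longrightarrow> W i j \<ge> 0"
    and Wr: "(\<Sum>j<N. W i j) = 1"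
  shows "consensus N W i qs x =
    normal_density ((\<Sum>j<N. W i j * (m j / (s j)^2)) / (\<Sum>j<N. W i j * (1 / (s j)^2)))
       (sqrt (1 / (\<Sum>j<N. W i j * (1 / (s j)^2)))) x"
proof -
  define P where "P = (\<Sum>j<N. W i j * (1 / (s j)^2))"
  define B where "B = (\<Sum>j<N. W i j * (m j / (s j)^2))"
  define D where "D = (\<Sum>j<N. W i j * (-(m j^2)/(2 * s j^2) - ln (sqrt (2 * pi * s j^2))))"
  have "\<exists>j<N. W i j > 0"
  proof (rule ccontr)
    assume "\<not> (\<exists>j<N. W i j > 0)"
    hence "\<forall>j<N. W i j = 0" using Wn by force
    hence "(\<Sum>j<N. W i j) = 0" by simp
    with Wr show False by simp
  qed
  then obtain j where j: "j < N" "W i j > 0" by blast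
  have P: "P > 0" unfolding P_def
    by (rule sum_pos2[of _ j]) (use j s Wn in auto)
  define f where "f = (\<lambda>x. exp (\<Sum>j<N. W i j * ln (qs j x)))"
  have f: "f z = exp (-(P/2)*z^2 + B*z + D)" for z
  proof -
    have "(\<Sum>j<N. W i j * ln (qs j z)) = (\<Sum>j<N. (-(W i j * (1 / (s j)^2))/2)*z^2 + (W i j * (m j / (s j)^2))*z
         + W i j * (-(m j^2)/(2 * s j^2) - ln (sqrt (2 * pi * s j^2))))"
    proof (rule sum.cong)
      fix j assume "j \<in> {..<N}"
      hence jN: "j < N" by simp
      thus "W i j * ln (qs j z) = (-(W i j * (1 / (s j)^2))/2)*z^2 + (W i j * (m j / (s j)^2))*z
         + W i j * (-(m j^2)/(2 * s j^2) - ln (sqrt (2 * pi * s j^2)))"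
        by (simp only: q[OF jN] ln_nd[OF s[OF jN]] lin_term)
    qed simp
    also have "\<dots> = -(P/2)*z^2 + B*z + D"
      unfolding sum_quad P_def B_def D_def sum_divide_distrib[symmetric] sum_negf by simp
    finally show ?thesis unfolding f_def by simp
  qed
  have "consensus N W i qs x = f x / (LINT z|lborel. f z)"
    unfolding consensus_def f_def ..
  also have "\<dots> = normal_density (B/P) (sqrt (1/P)) x"
    by (rule gauss_norm[OF P f])
  finally show ?thesis unfolding P_def B_def .
qed

lemma Psum_pos:
  fixes N :: nat
  assumes s: "\<And>j. j < N \<Longrightarrow> s j \<noteq> 0"
    and Wn: "\<And>j. j < N \<Longrightarrow> W i j \<ge> 0"
    and Wr: "(\<Sum>j<N. W i j) = 1"
  shows "(\<Sum>j<N. W i j * (1 / (s j)^2)) > (0::real)"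
proof -
  have "\<exists>j<N. W i j > 0"
  proof (rule ccontr)
    assume "\<not> (\<exists>j<N. W i j > 0)"
    hence "\<forall>j<N. W i j = 0" using Wn by force
    hence "(\<Sum>j<N. W i j) = 0" by simp
    with Wr show False by simp
  qed
  then obtain j where j: "j < N" "W i j > 0" by blast
  show ?thesis
    by (rule sum_pos2[of _ j]) (use j s Wn in auto)
qed

lemma sq_recip: "(a::real) \<noteq> 0 \<Longrightarrow> 1 / a^2 = P \<Longrightarrow> (sqrt (1/P))^2 = a^2"
  by auto

theorem lemma2:
  fixes N K :: nat
    and W :: "nat \<Rightarrow> nat \<Rightarrow> real"
    and E :: "nat \<Rightarrow> nat \<Rightarrow> bool"
    and \<sigma> \<eta> \<mu>0 \<sigma>0 :: real
    and A :: "nat \<Rightarrow> nat \<Rightarrow> nat" and Y :: "nat \<Rightarrow> nat \<Rightarrow> real"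
    and mu sig mut sigt :: "nat \<Rightarrow> nat \<Rightarrow> nat \<Rightarrow> real"
  assumes W_nonneg: "\<And>i j. i < N \<Longrightarrow> j < N \<Longrightarrow> W i j \<ge> 0"
    and W_rows: "\<And>i. i < N \<Longrightarrow> (\<Sum>j<N. W i j) = 1"
    and W_cols: "\<And>j. j < N \<Longrightarrow> (\<Sum>i<N. W i j) = 1"
    and E_sym: "\<And>i j. E i j \<Longrightarrow> E j i"
    and W_graph: "\<And>i j. i < N \<Longrightarrow> j < N \<Longrightarrow> i \<noteq> j \<Longrightarrow> W i j \<noteq> 0 \<Longrightarrow> E i j"
    and E_conn: "\<And>i j. i < N \<Longrightarrow> j < N \<Longrightarrow> (\<lambda>a b. a < N \<and> b < N \<and> E a b)\<^sup>*\<^sup>* i j"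
    and \<sigma>_pos: "\<sigma> > 0" and \<eta>_pos: "\<eta> > 0" and \<sigma>0_pos: "\<sigma>0 > 0"
    and mu1: "\<And>i k. mu i k 1 = \<mu>0"
    and sig1: "\<And>i k. sig i k 1 = \<sigma>0"
    and sigt_def: "\<And>t i k. t \<ge> 1 \<Longrightarrow> i < N \<Longrightarrow> k < K \<Longrightarrow>
        sigt i k (t + 1) = (1 / (sig i k t)\<^sup>2 + \<eta> * indic (A i t = k) / \<sigma>\<^sup>2) powr (-1/2)"
    and mut_def: "\<And>t i k. t \<ge> 1 \<Longrightarrow> i < N \<Longrightarrow> k < K \<Longrightarrow>
        mut i k (t + 1) = mu i k t * (sigt i k (t + 1) / sig i k t)\<^sup>2
                          + \<eta> * Y i t * indic (A i t = k) * (sigt i k (t + 1) / \<sigma>)\<^sup>2"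
    and sig_def: "\<And>t i k. t \<ge> 1 \<Longrightarrow> i < N \<Longrightarrow> k < K \<Longrightarrow>
        1 / (sig i k (t + 1))\<^sup>2 = (\<Sum>j<N. W i j * (1 / (sigt j k (t + 1))\<^sup>2))"
    and mu_def: "\<And>t i k. t \<ge> 1 \<Longrightarrow> i < N \<Longrightarrow> k < K \<Longrightarrow>
        mu i k (t + 1) / (sig i k (t + 1))\<^sup>2 = (\<Sum>j<N. W i j * (mut j k (t + 1) / (sigt j k (t + 1))\<^sup>2))"
  shows "\<forall>t \<ge> 1. \<forall>i < N. \<forall>k < K.
           dbb_qt N W \<sigma> \<eta> (normal_density \<mu>0 \<sigma>0) A Y (t + 1) i k
             = normal_density (mut i k (t + 1)) (sigt i k (t + 1))
         \<and> dbb_q N W \<sigma> \<eta> (normal_density \<mu>0 \<sigma>0) A Y (t + 1) i k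
             = normal_density (mu i k (t + 1)) (sig i k (t + 1))"
proof -
  define Q where "Q = dbb_q N W \<sigma> \<eta> (normal_density \<mu>0 \<sigma>0) A Y"
  have Qs: "Q (Suc t) = (\<lambda>i k. consensus N W i (\<lambda>j. local_step \<sigma> \<eta> A Y (Q t) t j k))" if "t \<ge> 1" for t
    using that unfolding Q_def by simp
  have Q1: "Q 1 = (\<lambda>i k. normal_density \<mu>0 \<sigma>0)" unfolding Q_def by simp
  have loc: "local_step \<sigma> \<eta> A Y (Q t) t i k = normal_density (mut i k (t + 1)) (sigt i k (t + 1))
        \<and> sigt i k (t + 1) \<noteq> 0"
    if t: "t \<ge> 1" and i: "i < N" and k: "k < K"
      and H: "Q t i k = normal_density (mu i k t) (sig i k t)" and s0: "sig i k t \<noteq> 0" for t i k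
  proof -
    define P where "P = 1 / (sig i k t)\<^sup>2 + \<eta> * indic (A i t = k) / \<sigma>\<^sup>2"
    have P: "P > 0" unfolding P_def indic_def using s0 \<eta>_pos \<sigma>_pos by (simp add: add_pos_nonneg)
    have st: "sigt i k (t + 1) = P powr (-1/2)" using sigt_def[OF t i k] unfolding P_def .
    have st2: "(sigt i k (t + 1))^2 = 1 / P" unfolding st using P by (rule powr_half_sq)
    have stnz: "sigt i k (t + 1) \<noteq> 0" using st P by simp
    have mt: "mut i k (t + 1) = mu i k t * (1/P) / (sig i k t)^2 + \<eta> * Y i t * indic (A i t = k) * (1/P) / \<sigma>^2"
      using mut_def[OF t i k] unfolding power_divide st2 by simp
    show ?thesis
    proof (cases "A i t = k")
      case True
      have "local_step \<sigma> \<eta> A Y (Q t) t i k = temper \<sigma> \<eta> (normal_density (mu i k t) (sig i k t)) (Y i t)"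
        unfolding local_step_def using True H by simp
      also have "\<dots> = normal_density (mut i k (t + 1)) (sigt i k (t + 1))"
      proof
        fix x
        have PP: "P = 1 / (sig i k t)\<^sup>2 + \<eta> / \<sigma>\<^sup>2" unfolding P_def indic_def using True by simp
        have "temper \<sigma> \<eta> (normal_density (mu i k t) (sig i k t)) (Y i t) x
           = normal_density ((mu i k t/(sig i k t)^2 + \<eta>*Y i t/\<sigma>^2)/P) (sqrt (1/P)) x"
          unfolding PP by (rule temper_nd[OF s0 \<sigma>_pos \<eta>_pos])
        also have "\<dots> = normal_density (mut i k (t + 1)) (sigt i k (t + 1)) x"
        proof (rule nd_cong[THEN trans])
          show "(sqrt (1/P))^2 = (sigt i k (t + 1))^2" using P st2 by simp
          show "normal_density ((mu i k t/(sig i k t)^2 + \<eta>*Y i t/\<sigma>^2)/P) (sigt i k (t + 1)) x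
              = normal_density (mut i k (t + 1)) (sigt i k (t + 1)) x"
            unfolding mt using True by (simp add: indic_def add_divide_distrib mult.commute)
        qed
        finally show "temper \<sigma> \<eta> (normal_density (mu i k t) (sig i k t)) (Y i t) x
           = normal_density (mut i k (t + 1)) (sigt i k (t + 1)) x" .
      qed
      finally show ?thesis using stnz by simp
    next
      case False
      have "local_step \<sigma> \<eta> A Y (Q t) t i k = normal_density (mu i k t) (sig i k t)"
        unfolding local_step_def using False H by simp
      also have "\<dots> = normal_density (mut i k (t + 1)) (sigt i k (t + 1))"
      proof
        fix x
        have PP: "P = 1 / (sig i k t)\<^sup>2" unfolding P_def indic_def using False by simp
        have m: "mut i k (t + 1) = mu i k t" unfolding mt PP using False s0 by (simp add: indic_def)
        show "normal_density (mu i k t) (sig i k t) x = normal_density (mut i k (t + 1)) (sigt i k (t + 1)) x"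
          unfolding m by (rule nd_cong) (use st2 PP in simp)
      qed
      finally show ?thesis using stnz by simp
    qed
  qed
  have cons: "Q (t + 1) i k = normal_density (mu i k (t + 1)) (sig i k (t + 1)) \<and> sig i k (t + 1) \<noteq> 0"
    if t: "t \<ge> 1" and i: "i < N" and k: "k < K"
      and H: "\<And>j. j < N \<Longrightarrow> Q t j k = normal_density (mu j k t) (sig j k t) \<and> sig j k t \<noteq> 0" for t i k
  proof -
    have L: "\<And>j. j < N \<Longrightarrow> local_step \<sigma> \<eta> A Y (Q t) t j k = normal_density (mut j k (t + 1)) (sigt j k (t + 1))
        \<and> sigt j k (t + 1) \<noteq> 0"
      using loc[OF t _ k] H by blast
    define P where "P = (\<Sum>j<N. W i j * (1 / (sigt j k (t + 1))^2))"
    define B where "B = (\<Sum>j<N. W i j * (mut j k (t + 1) / (sigt j k (t + 1))^2))"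
    have P: "P > 0" unfolding P_def
      by (rule Psum_pos) (use L W_nonneg[OF i] W_rows[OF i] in auto)
    have sP: "1 / (sig i k (t + 1))\<^sup>2 = P" using sig_def[OF t i k] unfolding P_def .
    have snz: "sig i k (t + 1) \<noteq> 0" using sP P by auto
    have mB: "mu i k (t + 1) / (sig i k (t + 1))\<^sup>2 = B" using mu_def[OF t i k] unfolding B_def .
    have "Q (t + 1) i k = normal_density (mu i k (t + 1)) (sig i k (t + 1))"
    proof
      fix x
      have "Q (t + 1) i k x = consensus N W i (\<lambda>j. local_step \<sigma> \<eta> A Y (Q t) t j k) x"
        using Qs[OF t] by simp
      also have "\<dots> = normal_density (B/P) (sqrt (1/P)) x"
        unfolding B_def P_def
        by (rule consensus_nd) (use L W_nonneg[OF i] W_rows[OF i] in auto)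
      also have "\<dots> = normal_density (mu i k (t + 1)) (sig i k (t + 1)) x"
      proof -
        have "B / P = mu i k (t + 1)" using mB sP snz by (simp flip: mB sP)
        moreover have "(sqrt (1/P))^2 = (sig i k (t + 1))^2" by (rule sq_recip[OF snz sP])
        ultimately show ?thesis using nd_cong by metis
      qed
      finally show "Q (t + 1) i k x = normal_density (mu i k (t + 1)) (sig i k (t + 1)) x" .
    qed
    thus ?thesis using snz by simp
  qed
  have main: "\<forall>i<N. \<forall>k<K. Q t i k = normal_density (mu i k t) (sig i k t) \<and> sig i k t \<noteq> 0"
    if "t \<ge> 1" for t :: nat
    using that
  proof (induction t rule: dec_induct)
    case base
    then show ?case using Q1 mu1 sig1 \<sigma>0_pos by simp
  next
    case (step t)
    show ?case
    proof (intro allI impI)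
      fix i k assume i: "i < N" and k: "k < K"
      show "Q (Suc t) i k = normal_density (mu i k (Suc t)) (sig i k (Suc t)) \<and> sig i k (Suc t) \<noteq> 0"
        using cons[OF step(1) i k] step(3) k by simp
    qed
  qed
  show ?thesis
  proof (intro allI impI)
    fix t i k :: nat assume t: "1 \<le> t" and i: "i < N" and k: "k < K"
    have H: "Q t i k = normal_density (mu i k t) (sig i k t)" "sig i k t \<noteq> 0" using main[OF t] i k by auto
    have HH: "\<And>j. j < N \<Longrightarrow> Q t j k = normal_density (mu j k t) (sig j k t) \<and> sig j k t \<noteq> 0"
      using main[OF t] k by blast
    have e0: "dbb_qt N W \<sigma> \<eta> (normal_density \<mu>0 \<sigma>0) A Y (t + 1) i k = local_step \<sigma> \<eta> A Y (Q t) t i k"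
      unfolding dbb_qt_def Q_def by simp
    have e1: "dbb_qt N W \<sigma> \<eta> (normal_density \<mu>0 \<sigma>0) A Y (t + 1) i k
             = normal_density (mut i k (t + 1)) (sigt i k (t + 1))"
      unfolding e0 using loc[OF t i k H] by blast
    have e2: "dbb_q N W \<sigma> \<eta> (normal_density \<mu>0 \<sigma>0) A Y (t + 1) i k
             = normal_density (mu i k (t + 1)) (sig i k (t + 1))"
      using cons[OF t i k HH] unfolding Q_def by blast
    show "dbb_qt N W \<sigma> \<eta> (normal_density \<mu>0 \<sigma>0) A Y (t + 1) i k
             = normal_density (mut i k (t + 1)) (sigt i k (t + 1))
         \<and> dbb_q N W \<sigma> \<eta> (normal_density \<mu>0 \<sigma>0) A Y (t + 1) i k
             = normal_density (mu i k (t + 1)) (sig i k (t + 1))"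
      using e1 e2 by blast
  qed
qed

end
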